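(* Let $\Omega\subset\mathbb{R}^2$ be a bounded region whose boundary $\partial\Omega$, with its positive orientation (so that Green's theorem applies), is the union of $n_c$ rational Bernstein--B\'ezier curves $\mathbf{c}_1,\dots,\mathbf{c}_{n_c}$, each traversed as its parameter $s$ runs from $0$ to $1$. Here $$\mathbf{c}_i(s)=\big(x_i(s),y_i(s)\big)=\left(\frac{\sum_{j=0}^{m_i} w_{i,j}x_{i,j}B^{m_i}_j(s)}{\sum_{j=0}^{m_i} w_{i,j}B^{m_i}_j(s)},\ \frac{\sum_{j=0}^{m_i} w_{i,j}y_{i,j}B^{m_i}_j(s)}{\sum_{j=0}^{m_i} w_{i,j}B^{m_i}_j(s)}\right),\quad 0\le s\le 1,$$ has degree $m_i\ge 1$, control points $(x_{i,j},y_{i,j})\in\mathbb{R}^2$ and control weights $w_{i,j}>0$. Then for every integer $k\ge 0$ there exist $$n_q=\left\lceil \frac{k+1}{2}\right\rceil\sum_{i=1}^{n_c}\big(m_i(k+3)+1\big)$$ points $(x_l,y_l)\in\tilde\Omega$ and real weights $\omega_l$, $l=1,\dots,n_q$, such that $$\iint_\Omega p(x,y)\,dx\,dy=\sum_{l=1}^{n_q}\omega_l\,p(x_l,y_l)$$ for every real polynomial $p(x,y)$ of total degree at most $k$. Here $\tilde\Omega=[\min_{i,j}x_{i,j},\max_{i,j}x_{i,j}]\times[\min_{i,j}y_{i,j},\max_{i,j}y_{i,j}]$ is the bounding box of all the control points.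
   Context: The Bernstein basis polynomials of degree $m$ on $[0,1]$ are $B^m_j(s)=\binom{m}{j}s^j(1-s)^{m-j}$, $j=0,\dots,m$. Since all control weights are positive, each denominator $\sum_j w_{i,j}B^{m_i}_j(s)$ is strictly positive on $[0,1]$, so each curve is well defined and smooth there. The region may be multiply connected or have several components; its boundary then consists of several closed loops made up of these curves. *)

theory Defs
  imports "HOL-Complex_Analysis.Complex_Analysis"
begin

definition bernstein :: "nat \<Rightarrow> nat \<Rightarrow> real \<Rightarrow> real" where
  "bernstein m j s = real (m choose j) * s ^ j * (1 - s) ^ (m - j)"

definition rbezier ::
  "nat \<Rightarrow> (nat \<Rightarrow> real) \<Rightarrow> (nat \<Rightarrow> real) \<Rightarrow> (nat \<Rightarrow> real) \<Rightarrow> real \<Rightarrow> complex" where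
  "rbezier m X Y W s =
     (let d = (\<Sum>j\<le>m. W j * bernstein m j s)
      in Complex ((\<Sum>j\<le>m. W j * X j * bernstein m j s) / d)
                 ((\<Sum>j\<le>m. W j * Y j * bernstein m j s) / d))"

definition poly2 :: "nat \<Rightarrow> (nat \<Rightarrow> nat \<Rightarrow> real) \<Rightarrow> real \<Rightarrow> real \<Rightarrow> real" where
  "poly2 k c x y = (\<Sum>a\<le>k. \<Sum>b\<le>k - a. c a b * x ^ a * y ^ b)"

end

theory Submission
  imports Defs
begin


definition P1 :: "nat \<Rightarrow> (real \<Rightarrow> real) set" where
  "P1 n = {q. \<exists>d. \<forall>t. q t = (\<Sum>b\<le>n. d b * t ^ b)}"

definition P2 :: "nat \<Rightarrow> (real \<Rightarrow> real \<Rightarrow> real) set" where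
  "P2 k = {f. \<exists>c. \<forall>u v. f u v = poly2 k c u v}"

lemma P1_zero: "(\<lambda>t. 0) \<in> P1 n"
  unfolding P1_def by (rule CollectI, rule exI[of _ "\<lambda>_. 0"]) simp

lemma P1_add: "f \<in> P1 n \<Longrightarrow> g \<in> P1 n \<Longrightarrow> (\<lambda>t. f t + g t) \<in> P1 n"
  unfolding P1_def
proof safe
  fix d e assume "\<forall>t. f t = (\<Sum>b\<le>n. d b * t ^ b)" "\<forall>t. g t = (\<Sum>b\<le>n. e b * t ^ b)"
  then show "\<exists>d. \<forall>t. f t + g t = (\<Sum>b\<le>n. d b * t ^ b)"
    by (intro exI[of _ "\<lambda>b. d b + e b"]) (simp add: sum.distrib algebra_simps)
qed

lemma P1_smult: "f \<in> P1 n \<Longrightarrow> (\<lambda>t. a * f t) \<in> P1 n"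
  unfolding P1_def
proof safe
  fix d assume "\<forall>t. f t = (\<Sum>b\<le>n. d b * t ^ b)"
  then show "\<exists>d. \<forall>t. a * f t = (\<Sum>b\<le>n. d b * t ^ b)"
    by (intro exI[of _ "\<lambda>b. a * d b"]) (simp add: sum_distrib_left algebra_simps)
qed

lemma P1_sum: "finite A \<Longrightarrow> (\<And>i. i \<in> A \<Longrightarrow> f i \<in> P1 n) \<Longrightarrow> (\<lambda>t. \<Sum>i\<in>A. f i t) \<in> P1 n"
  by (induction A rule: finite_induct) (auto intro: P1_zero P1_add)

lemma P1_mono: "p \<le> n \<Longrightarrow> (\<lambda>t. t ^ p) \<in> P1 n"
  unfolding P1_def
proof (rule CollectI, rule exI[of _ "\<lambda>b. if b = p then 1 else 0"], intro allI)
  fix t :: real assume "p \<le> n"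
  have "(\<Sum>b\<le>n. (if b = p then 1 else 0) * t ^ b) = (\<Sum>b\<le>n. if b = p then t ^ b else 0)"
    by (rule sum.cong) auto
  also have "\<dots> = t ^ p" using \<open>p \<le> n\<close> by (simp add: sum.delta)
  finally show "t ^ p = (\<Sum>b\<le>n. (if b = p then 1 else 0) * t ^ b)" by simp
qed

lemma P1_factor:
  assumes "q \<in> P1 (Suc n)"
  shows "\<exists>g\<in>P1 n. \<forall>t. q t = q a + (t - a) * g t"
proof -
  obtain d where d: "\<And>t. q t = (\<Sum>b\<le>Suc n. d b * t ^ b)" using assms unfolding P1_def by blast
  define g where "g t = (\<Sum>b\<le>Suc n. d b * (\<Sum>p<b. t ^ p * a ^ (b - 1 - p)))" for t
  have "g \<in> P1 n" unfolding g_def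
    apply (rule P1_sum, simp)
    apply (rule P1_smult)
    apply (rule P1_sum, simp)
    apply (subst mult.commute, rule P1_smult, rule P1_mono)
    by auto
  moreover have "q t = q a + (t - a) * g t" for t
  proof -
    have e: "t ^ b - a ^ b = (t - a) * (\<Sum>p<b. t ^ p * a ^ (b - 1 - p))" for b
      proof (cases b)
        case (Suc m) then show ?thesis using diff_power_eq_sum[of t m a] by simp
      qed simp
    have "q t - q a = (\<Sum>b\<le>Suc n. d b * (t ^ b - a ^ b))"
      by (simp add: d sum_subtractf right_diff_distrib)
    also have "\<dots> = (t - a) * g t"
      by (simp add: e g_def sum_distrib_left algebra_simps)
    finally show ?thesis by simp
  qed
  ultimately show ?thesis by blast
qed

lemma P1_const: "q \<in> P1 0 \<Longrightarrow> q t = q 0"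
  unfolding P1_def by auto


lemma P2_zero: "(\<lambda>u v. 0) \<in> P2 n"
  unfolding P2_def poly2_def by (rule CollectI, rule exI[of _ "\<lambda>_ _. 0"]) simp

lemma P2_add: "f \<in> P2 n \<Longrightarrow> g \<in> P2 n \<Longrightarrow> (\<lambda>u v. f u v + g u v) \<in> P2 n"
  unfolding P2_def
proof safe
  fix d e assume "\<forall>u v. f u v = poly2 n d u v" "\<forall>u v. g u v = poly2 n e u v"
  then show "\<exists>c. \<forall>u v. f u v + g u v = poly2 n c u v"
    by (intro exI[of _ "\<lambda>a b. d a b + e a b"]) (simp add: poly2_def sum.distrib algebra_simps)
qed

lemma P2_smult: "f \<in> P2 n \<Longrightarrow> (\<lambda>u v. a * f u v) \<in> P2 n"
  unfolding P2_def
proof safe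
  fix d assume "\<forall>u v. f u v = poly2 n d u v"
  then show "\<exists>c. \<forall>u v. a * f u v = poly2 n c u v"
    by (intro exI[of _ "\<lambda>i j. a * d i j"]) (simp add: poly2_def sum_distrib_left algebra_simps)
qed

lemma P2_sum: "finite A \<Longrightarrow> (\<And>i. i \<in> A \<Longrightarrow> f i \<in> P2 n) \<Longrightarrow> (\<lambda>u v. \<Sum>i\<in>A. f i u v) \<in> P2 n"
  by (induction A rule: finite_induct) (auto intro: P2_zero P2_add)

lemma P2_mono: "p + r \<le> n \<Longrightarrow> (\<lambda>u v. u ^ p * v ^ r) \<in> P2 n"
  unfolding P2_def
proof (rule CollectI, rule exI[of _ "\<lambda>a b. if a = p \<and> b = r then 1 else 0"], intro allI)
  fix u v :: real assume pr: "p + r \<le> n"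
  have "poly2 n (\<lambda>a b. if a = p \<and> b = r then 1 else 0) u v
      = (\<Sum>a\<le>n. if a = p then u ^ p * v ^ r else 0)"
    unfolding poly2_def
  proof (rule sum.cong, simp)
    fix a assume "a \<in> {..n}"
    show "(\<Sum>b\<le>n - a. (if a = p \<and> b = r then 1 else 0) * u ^ a * v ^ b) = (if a = p then u ^ p * v ^ r else 0)"
    proof (cases "a = p")
      case True
      have "(\<Sum>b\<le>n - a. (if a = p \<and> b = r then 1 else 0) * u ^ a * v ^ b) = (\<Sum>b\<le>n - a. if b = r then u ^ p * v ^ r else 0)"
        by (rule sum.cong) (auto simp: True)
      also have "\<dots> = u ^ p * v ^ r" using pr True by (simp add: sum.delta)
      finally show ?thesis using True by simp
    qed simp
  qed
  also have "\<dots> = u ^ p * v ^ r" using pr by (simp add: sum.delta)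
  finally show "u ^ p * v ^ r = poly2 n (\<lambda>a b. if a = p \<and> b = r then 1 else 0) u v" by simp
qed

lemma P2_mono_c: "p + r \<le> n \<Longrightarrow> (\<lambda>u v. u ^ p * e * v ^ r) \<in> P2 n"
proof -
  assume "p + r \<le> n"
  then have "(\<lambda>u v. e * (u ^ p * v ^ r)) \<in> P2 n" by (intro P2_smult P2_mono)
  then show ?thesis by (simp add: ac_simps)
qed

lemma P2_factor:
  assumes "f \<in> P2 (Suc n)"
  shows "\<exists>g\<in>P2 n. \<forall>u v. f u v = f a v + (u - a) * g u v"
proof -
  obtain c where c: "\<And>u v. f u v = poly2 (Suc n) c u v" using assms unfolding P2_def by blast
  define g where "g u v = (\<Sum>i\<le>Suc n. \<Sum>j\<le>Suc n - i. c i j * ((\<Sum>p<i. u ^ p * a ^ (i - 1 - p)) * v ^ j))" for u v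
  have "g \<in> P2 n" unfolding g_def
    apply (rule P2_sum, simp)
    apply (rule P2_sum, simp)
    apply (rule P2_smult)
    apply (simp only: sum_distrib_right)
    apply (rule P2_sum, simp)
    apply (rule P2_mono_c)
    by auto
  moreover have "f u v = f a v + (u - a) * g u v" for u v
  proof -
    have e: "t ^ b - a ^ b = (t - a) * (\<Sum>p<b. t ^ p * a ^ (b - 1 - p))" for b and t :: real
      proof (cases b)
        case (Suc m) then show ?thesis using diff_power_eq_sum[of t m a] by simp
      qed simp
    have "f u v - f a v = (\<Sum>i\<le>Suc n. \<Sum>j\<le>Suc n - i. c i j * ((u ^ i - a ^ i) * v ^ j))"
      by (simp add: c poly2_def sum_subtractf algebra_simps)
    also have "\<dots> = (u - a) * g u v"
      by (simp add: e g_def sum_distrib_left algebra_simps)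
    finally show ?thesis by simp
  qed
  ultimately show ?thesis by blast
qed

lemma P2_const: "f \<in> P2 0 \<Longrightarrow> f u v = f 0 0"
  unfolding P2_def poly2_def by auto

lemma P2_slice: "f \<in> P2 n \<Longrightarrow> (\<lambda>v. f a v) \<in> P1 n"
proof -
  assume "f \<in> P2 n"
  then obtain c where c: "\<And>u v. f u v = poly2 n c u v" unfolding P2_def by blast
  have "(\<lambda>v. \<Sum>i\<le>n. \<Sum>j\<le>n - i. c i j * a ^ i * v ^ j) \<in> P1 n"
    apply (rule P1_sum, simp, rule P1_sum, simp)
    apply (rule P1_smult, rule P1_mono) by auto
  then show ?thesis by (simp add: c poly2_def)
qed



lemma interp1:
  assumes "inj y"
  shows "\<exists>\<Phi>. (\<forall>s. continuous_on UNIV (\<Phi> s)) \<and>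
             (\<forall>q\<in>P1 n. \<forall>t. q t = (\<Sum>s\<le>n. q (y s) * \<Phi> s t))"
  using assms
proof (induction n arbitrary: y)
  case 0
  show ?case
    by (rule exI[of _ "\<lambda>s t. 1"]) (auto simp: P1_def)
next
  case (Suc n)
  have inj': "inj (y \<circ> Suc)" using Suc.prems by (intro inj_compose) (auto simp: inj_on_def)
  obtain \<Psi> where cont: "\<And>s. continuous_on UNIV (\<Psi> s)"
    and rep: "\<And>q t. q \<in> P1 n \<Longrightarrow> q t = (\<Sum>s\<le>n. q (y (Suc s)) * \<Psi> s t)"
    using Suc.IH[OF inj'] by auto
  define A where "A s t = (t - y 0) * \<Psi> s t / (y (Suc s) - y 0)" for s t
  define \<Phi> where "\<Phi> s t = (case s of 0 \<Rightarrow> 1 - (\<Sum>r\<le>n. A r t) | Suc r \<Rightarrow> A r t)" for s t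
  have ne: "y (Suc s) - y 0 \<noteq> 0" for s using Suc.prems by (metis eq_iff_diff_eq_0 injD nat.distinct(1))
  have contA: "continuous_on UNIV (A s)" for s
    unfolding A_def using ne[of s] by (intro continuous_intros cont) auto
  have "continuous_on UNIV (\<Phi> s)" for s
    by (cases s) (simp_all add: \<Phi>_def contA continuous_intros)
  moreover have "q t = (\<Sum>s\<le>Suc n. q (y s) * \<Phi> s t)" if q: "q \<in> P1 (Suc n)" for q t
  proof -
    obtain g where g: "g \<in> P1 n" and fq: "\<And>t. q t = q (y 0) + (t - y 0) * g t"
      using P1_factor[OF q] by blast
    have gy: "g (y (Suc s)) = (q (y (Suc s)) - q (y 0)) / (y (Suc s) - y 0)" for s
      using fq[of "y (Suc s)"] ne[of s] by (simp add: field_simps)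
    have "(\<Sum>s\<le>Suc n. q (y s) * \<Phi> s t) = q (y 0) * (1 - (\<Sum>r\<le>n. A r t)) + (\<Sum>s\<le>n. q (y (Suc s)) * A s t)"
      by (subst sum.atMost_Suc_shift) (simp add: \<Phi>_def)
    also have "\<dots> = q (y 0) + (\<Sum>s\<le>n. (q (y (Suc s)) - q (y 0)) * A s t)"
      by (simp add: algebra_simps sum_distrib_left sum_subtractf)
    also have "\<dots> = q (y 0) + (t - y 0) * (\<Sum>s\<le>n. g (y (Suc s)) * \<Psi> s t)"
      by (simp add: gy A_def sum_distrib_left ac_simps)
    also have "\<dots> = q t" using rep[OF g, of t] fq[of t] by simp
    finally show ?thesis by simp
  qed
  ultimately show ?case by blast
qed



lemma tri_swap:
  "(\<Sum>s\<le>Suc k. \<Sum>r\<le>k. if s \<le> k - r then F r s else 0) = (\<Sum>r\<le>k. \<Sum>s\<le>k-r. (F r s :: real))"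
proof -
  have "(\<Sum>s\<le>Suc k. \<Sum>r\<le>k. if s \<le> k - r then F r s else 0) = (\<Sum>r\<le>k. \<Sum>s\<le>Suc k. if s \<le> k - r then F r s else 0)"
    by (rule sum.swap)
  also have "\<dots> = (\<Sum>r\<le>k. \<Sum>s\<le>k-r. F r s)"
  proof (rule sum.cong, simp)
    fix r assume "r \<in> {..k}"
    have "(\<Sum>s\<le>Suc k. if s \<le> k - r then F r s else 0) = (\<Sum>s\<in>{..Suc k} \<inter> {s. s \<le> k - r}. F r s)"
      by (simp add: sum.inter_restrict)
    also have "{..Suc k} \<inter> {s. s \<le> k - r} = {..k - r}" by auto
    finally show "(\<Sum>s\<le>Suc k. if s \<le> k - r then F r s else 0) = (\<Sum>s\<le>k-r. F r s)" by simp
  qed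
  finally show ?thesis .
qed

lemma interp2:
  assumes "inj x" "inj y"
  shows "\<exists>\<Phi>. (\<forall>r s. continuous_on UNIV (\<lambda>z::complex. \<Phi> r s (Re z) (Im z))) \<and>
    (\<forall>f\<in>P2 k. \<forall>u v. f u v = (\<Sum>r\<le>k. \<Sum>s\<le>k-r. f (x r) (y s) * \<Phi> r s u v))"
  using assms(1)
proof (induction k arbitrary: x)
  case 0
  show ?case
    by (rule exI[of _ "\<lambda>r s u v. 1"]) (auto simp: P2_def poly2_def)
next
  case (Suc k)
  have inj': "inj (x \<circ> Suc)" using Suc.prems by (intro inj_compose) (auto simp: inj_on_def)
  from Suc.IH[OF inj'] obtain \<Phi>' where cont: "\<And>r s. continuous_on UNIV (\<lambda>z::complex. \<Phi>' r s (Re z) (Im z))"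
    and rep0: "\<forall>f\<in>P2 k. \<forall>u v. f u v = (\<Sum>r\<le>k. \<Sum>s\<le>k-r. f ((x \<circ> Suc) r) (y s) * \<Phi>' r s u v)"
    by blast
  have rep: "\<And>f u v. f \<in> P2 k \<Longrightarrow> f u v = (\<Sum>r\<le>k. \<Sum>s\<le>k-r. f (x (Suc r)) (y s) * \<Phi>' r s u v)"
    using rep0 by simp
  obtain \<Psi> where contP: "\<And>s. continuous_on UNIV (\<Psi> s)"
    and rep1: "\<And>q t. q \<in> P1 (Suc k) \<Longrightarrow> q t = (\<Sum>s\<le>Suc k. q (y s) * \<Psi> s t)"
    using interp1[OF assms(2), of "Suc k"] by auto
  have ne: "x (Suc s) - x 0 \<noteq> 0" for s using Suc.prems by (metis eq_iff_diff_eq_0 injD nat.distinct(1))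
  define A where "A r s u v = (u - x 0) * \<Phi>' r s u v / (x (Suc r) - x 0)" for r s u v
  define \<Phi> where "\<Phi> r s u v = (case r of 0 \<Rightarrow> \<Psi> s v - (\<Sum>r'\<le>k. if s \<le> k - r' then A r' s u v else 0)
       | Suc r' \<Rightarrow> A r' s u v)" for r s u v
  have contA: "continuous_on UNIV (\<lambda>z::complex. A r s (Re z) (Im z))" for r s
    unfolding A_def using ne[of r] by (intro continuous_intros cont) auto
  have contA': "continuous_on UNIV (\<lambda>z::complex. if s \<le> k - r then A r s (Re z) (Im z) else 0)" for r s
    by (cases "s \<le> k - r") (simp_all add: contA)
  have contPs: "continuous_on UNIV (\<lambda>z::complex. \<Psi> s (Im z))" for s
    by (rule continuous_on_compose2[OF contP[of s] continuous_on_Im]) auto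
  have "continuous_on UNIV (\<lambda>z::complex. \<Phi> r s (Re z) (Im z))" for r s
    by (cases r) (simp_all add: \<Phi>_def contA contA' contPs continuous_intros)
  moreover have "f u v = (\<Sum>r\<le>Suc k. \<Sum>s\<le>Suc k-r. f (x r) (y s) * \<Phi> r s u v)"
    if f: "f \<in> P2 (Suc k)" for f u v
  proof -
    obtain g where g: "g \<in> P2 k" and fg: "\<And>u v. f u v = f (x 0) v + (u - x 0) * g u v"
      using P2_factor[OF f] by blast
    have gy: "g (x (Suc r)) w = (f (x (Suc r)) w - f (x 0) w) / (x (Suc r) - x 0)" for r w
      using fg[of "x (Suc r)" w] ne[of r] by (simp add: field_simps)
    have sl: "f (x 0) v = (\<Sum>s\<le>Suc k. f (x 0) (y s) * \<Psi> s v)"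
      using rep1[OF P2_slice[OF f, of "x 0"]] .
    have "(\<Sum>r\<le>Suc k. \<Sum>s\<le>Suc k-r. f (x r) (y s) * \<Phi> r s u v)
        = (\<Sum>s\<le>Suc k. f (x 0) (y s) * (\<Psi> s v - (\<Sum>r'\<le>k. if s \<le> k - r' then A r' s u v else 0)))
          + (\<Sum>r\<le>k. \<Sum>s\<le>k-r. f (x (Suc r)) (y s) * A r s u v)"
      by (subst sum.atMost_Suc_shift) (simp add: \<Phi>_def)
    also have "(\<Sum>s\<le>Suc k. f (x 0) (y s) * (\<Psi> s v - (\<Sum>r'\<le>k. if s \<le> k - r' then A r' s u v else 0)))
        = f (x 0) v - (\<Sum>s\<le>Suc k. \<Sum>r\<le>k. if s \<le> k - r then f (x 0) (y s) * A r s u v else 0)"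
      by (simp add: sl right_diff_distrib sum_subtractf sum_distrib_left if_distrib cong: if_cong)
    also have "(\<Sum>s\<le>Suc k. \<Sum>r\<le>k. if s \<le> k - r then f (x 0) (y s) * A r s u v else 0)
        = (\<Sum>r\<le>k. \<Sum>s\<le>k-r. f (x 0) (y s) * A r s u v)"
      by (rule tri_swap)
    also have "f (x 0) v - (\<Sum>r\<le>k. \<Sum>s\<le>k-r. f (x 0) (y s) * A r s u v)
        + (\<Sum>r\<le>k. \<Sum>s\<le>k-r. f (x (Suc r)) (y s) * A r s u v)
        = f (x 0) v + (\<Sum>r\<le>k. \<Sum>s\<le>k-r. (f (x (Suc r)) (y s) - f (x 0) (y s)) * A r s u v)"
      by (simp add: left_diff_distrib sum_subtractf)
    also have "(\<Sum>r\<le>k. \<Sum>s\<le>k-r. (f (x (Suc r)) (y s) - f (x 0) (y s)) * A r s u v)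
        = (u - x 0) * (\<Sum>r\<le>k. \<Sum>s\<le>k-r. g (x (Suc r)) (y s) * \<Phi>' r s u v)"
      by (simp add: gy A_def sum_distrib_left ac_simps)
    also have "f (x 0) v + \<dots> = f u v" using rep[OF g, of u v] fg[of u v] by simp
    finally show ?thesis by simp
  qed
  ultimately show ?case by blast
qed



lemma bernstein_sum: "(\<Sum>j\<le>m. bernstein m j s) = 1"
  using binomial_ring[of s "1 - s" m] by (simp add: bernstein_def ac_simps)

lemma bernstein_nonneg: "0 \<le> s \<Longrightarrow> s \<le> 1 \<Longrightarrow> 0 \<le> bernstein m j s"
  by (simp add: bernstein_def)

lemma convcomb_bounds:
  fixes a Z :: "nat \<Rightarrow> real"
  assumes "finite J" "\<And>j. j \<in> J \<Longrightarrow> 0 \<le> a j" "0 < sum a J"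
    "\<And>j. j \<in> J \<Longrightarrow> lo \<le> Z j" "\<And>j. j \<in> J \<Longrightarrow> Z j \<le> hi"
  shows "lo \<le> (\<Sum>j\<in>J. a j * Z j) / sum a J \<and> (\<Sum>j\<in>J. a j * Z j) / sum a J \<le> hi"
proof -
  have "lo * sum a J \<le> (\<Sum>j\<in>J. a j * Z j)"
    unfolding sum_distrib_left by (rule sum_mono) (simp add: assms mult.commute mult_right_mono)
  moreover have "(\<Sum>j\<in>J. a j * Z j) \<le> hi * sum a J"
    unfolding sum_distrib_left by (rule sum_mono) (simp add: assms mult.commute mult_right_mono)
  ultimately show ?thesis using assms(3) by (simp add: field_simps)
qed

lemma rbezier_in_box:
  assumes W: "\<And>j. j \<le> m \<Longrightarrow> 0 < W j" and s: "0 \<le> s" "s \<le> 1"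
    and X: "\<And>j. j \<le> m \<Longrightarrow> xl \<le> X j \<and> X j \<le> xh"
    and Y: "\<And>j. j \<le> m \<Longrightarrow> yl \<le> Y j \<and> Y j \<le> yh"
  shows "xl \<le> Re (rbezier m X Y W s) \<and> Re (rbezier m X Y W s) \<le> xh \<and>
         yl \<le> Im (rbezier m X Y W s) \<and> Im (rbezier m X Y W s) \<le> yh"
proof -
  define a where "a j = W j * bernstein m j s" for j
  have a0: "0 \<le> a j" if "j \<le> m" for j
    unfolding a_def using W[OF that] bernstein_nonneg[OF s] by simp
  have "\<exists>j\<le>m. 0 < bernstein m j s"
  proof (rule ccontr)
    assume "\<not> ?thesis"
    then have "(\<Sum>j\<le>m. bernstein m j s) \<le> 0" by (intro sum_nonpos) auto
    then show False by (simp add: bernstein_sum)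
  qed
  then obtain j0 where j0: "j0 \<le> m" "0 < bernstein m j0 s" by blast
  have pos: "0 < sum a {..m}"
    by (rule sum_pos2[of _ j0]) (use j0 W a0 in \<open>auto simp: a_def\<close>)
  have ex: "(\<Sum>j\<le>m. W j * X j * bernstein m j s) = (\<Sum>j\<le>m. a j * X j)"
    "(\<Sum>j\<le>m. W j * Y j * bernstein m j s) = (\<Sum>j\<le>m. a j * Y j)"
    "(\<Sum>j\<le>m. W j * bernstein m j s) = sum a {..m}"
    by (simp_all add: a_def ac_simps)
  show ?thesis
    using convcomb_bounds[where J="{..m}" and a=a and Z=X and lo=xl and hi=xh]
      convcomb_bounds[where J="{..m}" and a=a and Z=Y and lo=yl and hi=yh] a0 pos X Y
    unfolding rbezier_def Let_def ex by auto
qed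

lemma ray_frontier:
  fixes S :: "complex set"
  assumes "bounded S" "z \<in> S" "d \<noteq> 0"
  shows "\<exists>t\<ge>0. z + of_real t * d \<in> frontier S"
proof -
  obtain R where R: "\<And>w. w \<in> S \<Longrightarrow> norm w \<le> R"
    using assms(1) bounded_iff by blast
  define T where "T = (R + norm z + 1) / norm d"
  have "0 \<le> R" using R[OF assms(2)] norm_ge_zero order_trans by blast
  then have T0: "0 \<le> T" by (simp add: T_def)
  define w where "w = z + of_real T * d"
  have "norm (of_real T * d) = T * norm d" using T0 by (simp add: norm_mult)
  also have "\<dots> = R + norm z + 1" using assms(3) by (simp add: T_def)
  finally have nT: "norm (of_real T * d) = R + norm z + 1" .
  have "R + 1 \<le> norm w"
    using nT norm_triangle_ineq2[of "of_real T * d" "-z"] unfolding w_def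
    by (simp add: algebra_simps norm_minus_commute)
  then have "w \<notin> S" using R by force
  have "closed_segment z w \<inter> frontier S \<noteq> {}"
    by (rule connected_Int_frontier) (use assms(2) \<open>w \<notin> S\<close> in auto)
  then obtain p where p: "p \<in> closed_segment z w" "p \<in> frontier S" by blast
  then obtain u where u: "0 \<le> u" "u \<le> 1" "p = (1 - u) *\<^sub>R z + u *\<^sub>R w"
    unfolding closed_segment_def by blast
  have "p = z + of_real (u * T) * d"
    unfolding u(3) w_def by (simp add: scaleR_conv_of_real algebra_simps)
  then show ?thesis using p(2) T0 u by (intro exI[of _ "u * T"]) auto
qed

lemma subset_box:
  fixes S :: "complex set"
  assumes "bounded S" "frontier S \<subseteq> {z. xl \<le> Re z \<and> Re z \<le> xh \<and> yl \<le> Im z \<and> Im z \<le> yh}"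
    and "z \<in> S"
  shows "xl \<le> Re z \<and> Re z \<le> xh \<and> yl \<le> Im z \<and> Im z \<le> yh"
proof -
  obtain t1 where "t1 \<ge> 0" "z + of_real t1 * 1 \<in> frontier S" using ray_frontier[OF assms(1,3), of 1] by auto
  obtain t2 where "t2 \<ge> 0" "z + of_real t2 * (-1) \<in> frontier S" using ray_frontier[OF assms(1,3), of "-1"] by auto
  obtain t3 where "t3 \<ge> 0" "z + of_real t3 * \<i> \<in> frontier S" using ray_frontier[OF assms(1,3), of "\<i>"] by auto
  obtain t4 where "t4 \<ge> 0" "z + of_real t4 * (-\<i>) \<in> frontier S" using ray_frontier[OF assms(1,3), of "-\<i>"] by auto
  show ?thesis using assms(2)
    \<open>t1 \<ge> 0\<close> \<open>z + of_real t1 * 1 \<in> frontier S\<close>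
    \<open>t2 \<ge> 0\<close> \<open>z + of_real t2 * (-1) \<in> frontier S\<close>
    \<open>t3 \<ge> 0\<close> \<open>z + of_real t3 * \<i> \<in> frontier S\<close>
    \<open>t4 \<ge> 0\<close> \<open>z + of_real t4 * (-\<i>) \<in> frontier S\<close>
    by force
qed

lemma integrable_cont_bounded_open:
  fixes f :: "complex \<Rightarrow> real"
  assumes "continuous_on UNIV f" "bounded S" "open S"
  shows "f integrable_on S"
proof -
  have meas: "S \<in> lmeasurable" using lmeasurable_open assms by blast
  have "compact (f ` closure S)"
    using assms by (intro compact_continuous_image) (auto intro: continuous_on_subset)
  then obtain B where B: "\<And>x. x \<in> closure S \<Longrightarrow> norm (f x) \<le> B"
    using compact_imp_bounded bounded_iff by (metis imageI)
  have "f absolutely_integrable_on S"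
  proof (rule measurable_bounded_by_integrable_imp_absolutely_integrable)
    show "f \<in> borel_measurable (lebesgue_on S)"
      using assms(1) meas by (intro continuous_imp_measurable_on_sets_lebesgue)
        (auto intro: continuous_on_subset)
    show "S \<in> sets lebesgue" using meas by auto
    show "(\<lambda>x. B) integrable_on S" using meas by (rule integrable_on_const)
    show "norm (f x) \<le> B" if "x \<in> S" for x using B that closure_subset by blast
  qed
  then show ?thesis using absolutely_integrable_on_def by blast
qed

lemma tri_card: "2 * (\<Sum>r\<le>k. Suc (k - r)) = (k + 1) * (k + 2)"
proof (induction k)
  case (Suc k)
  have "(\<Sum>r\<le>Suc k. Suc (Suc k - r)) = Suc (Suc k) + (\<Sum>r\<le>k. Suc (k - r))"
    by (subst sum.atMost_Suc_shift) simp
  then show ?case using Suc by simp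
qed simp


theorem mainTheorem1:
  fixes \<Omega> :: "complex set"
    and nc :: nat
    and m :: "nat \<Rightarrow> nat"
    and X Y W :: "nat \<Rightarrow> nat \<Rightarrow> real"
    and k :: nat
  assumes deg: "\<And>i. i < nc \<Longrightarrow> m i \<ge> 1"
    and wpos: "\<And>i j. i < nc \<Longrightarrow> j \<le> m i \<Longrightarrow> W i j > 0"
    and open_\<Omega>: "open \<Omega>"
    and bounded_\<Omega>: "bounded \<Omega>"
    and boundary: "frontier \<Omega> = (\<Union>i<nc. path_image (rbezier (m i) (X i) (Y i) (W i)))"
    and loops: "\<exists>\<sigma>. \<sigma> permutes {..<nc} \<and>
                  (\<forall>i<nc. pathfinish (rbezier (m i) (X i) (Y i) (W i)) =
                           pathstart (rbezier (m (\<sigma> i)) (X (\<sigma> i)) (Y (\<sigma> i)) (W (\<sigma> i))))"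
    and positive_orientation: "\<And>z. z \<notin> frontier \<Omega> \<Longrightarrow>
           (\<Sum>i<nc. winding_number (rbezier (m i) (X i) (Y i) (W i)) z) =
           (if z \<in> \<Omega> then 1 else 0)"
  shows "\<exists>pts :: nat \<Rightarrow> complex. \<exists>wts :: nat \<Rightarrow> real.
     (let nq = nat \<lceil>real (k + 1) / 2\<rceil> * (\<Sum>i<nc. m i * (k + 3) + 1);
          xmin = Min {X i j | i j. i < nc \<and> j \<le> m i};
          xmax = Max {X i j | i j. i < nc \<and> j \<le> m i};
          ymin = Min {Y i j | i j. i < nc \<and> j \<le> m i};
          ymax = Max {Y i j | i j. i < nc \<and> j \<le> m i}
      in (\<forall>l<nq. Re (pts l) \<in> {xmin..xmax} \<and> Im (pts l) \<in> {ymin..ymax}) \<and>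
         (\<forall>c :: nat \<Rightarrow> nat \<Rightarrow> real.
            integral \<Omega> (\<lambda>z. poly2 k c (Re z) (Im z)) =
            (\<Sum>l<nq. wts l * poly2 k c (Re (pts l)) (Im (pts l)))))"
proof -
  define XS where "XS = {X i j | i j. i < nc \<and> j \<le> m i}"
  define YS where "YS = {Y i j | i j. i < nc \<and> j \<le> m i}"
  define xmin where "xmin = Min XS"
  define xmax where "xmax = Max XS"
  define ymin where "ymin = Min YS"
  define ymax where "ymax = Max YS"
  define nq where "nq = nat \<lceil>real (k + 1) / 2\<rceil> * (\<Sum>i<nc. m i * (k + 3) + 1)"
  define Box where "Box = {z. xmin \<le> Re z \<and> Re z \<le> xmax \<and> ymin \<le> Im z \<and> Im z \<le> ymax}"
  have XSeq: "XS = (\<lambda>(i,j). X i j) ` Sigma {..<nc} (\<lambda>i. {..m i})"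
    unfolding XS_def by auto
  have YSeq: "YS = (\<lambda>(i,j). Y i j) ` Sigma {..<nc} (\<lambda>i. {..m i})"
    unfolding YS_def by auto
  have finX: "finite XS" and finY: "finite YS" unfolding XSeq YSeq by auto
  have Xb: "xmin \<le> X i j \<and> X i j \<le> xmax" if "i < nc" "j \<le> m i" for i j
  proof -
    have "X i j \<in> XS" using that unfolding XS_def by blast
    then show ?thesis unfolding xmin_def xmax_def using finX by auto
  qed
  have Yb: "ymin \<le> Y i j \<and> Y i j \<le> ymax" if "i < nc" "j \<le> m i" for i j
  proof -
    have "Y i j \<in> YS" using that unfolding YS_def by blast
    then show ?thesis unfolding ymin_def ymax_def using finY by auto
  qed
  have main: "\<exists>pts :: nat \<Rightarrow> complex. \<exists>wts :: nat \<Rightarrow> real.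
     (\<forall>l<nq. Re (pts l) \<in> {xmin..xmax} \<and> Im (pts l) \<in> {ymin..ymax}) \<and>
         (\<forall>c :: nat \<Rightarrow> nat \<Rightarrow> real.
            integral \<Omega> (\<lambda>z. poly2 k c (Re z) (Im z)) =
            (\<Sum>l<nq. wts l * poly2 k c (Re (pts l)) (Im (pts l))))"
  proof (cases "\<Omega> = {}")
    case True
    have "xmin \<le> xmax \<and> ymin \<le> ymax" if "l < nq" for l
    proof -
      have "nc \<noteq> 0" using that unfolding nq_def by (cases nc) auto
      then show ?thesis using Xb[of 0 0] Yb[of 0 0] by auto
    qed
    then show ?thesis using True
      by (intro exI[of _ "\<lambda>_. Complex xmin ymin"] exI[of _ "\<lambda>_. 0"]) auto
  next
    case False
    then obtain z0 where z0: "z0 \<in> \<Omega>" by blast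
    have fr_box: "frontier \<Omega> \<subseteq> Box"
    proof
      fix w assume "w \<in> frontier \<Omega>"
      then obtain i where i: "i < nc" and "w \<in> path_image (rbezier (m i) (X i) (Y i) (W i))"
        using boundary by auto
      then obtain s where s: "0 \<le> s" "s \<le> 1" and w: "w = rbezier (m i) (X i) (Y i) (W i) s"
        unfolding path_image_def by auto
      show "w \<in> Box" unfolding Box_def w
        using rbezier_in_box[where m="m i" and W="W i" and s=s and X="X i" and xl=xmin and xh=xmax and Y="Y i" and yl=ymin and yh=ymax] wpos[OF i] Xb[OF i] Yb[OF i] s
        by auto
    qed
    have inbox: "z \<in> Box" if "z \<in> \<Omega>" for z
      using subset_box[OF bounded_\<Omega> _ that] fr_box unfolding Box_def by blast
    obtain e where e: "e > 0" "ball z0 e \<subseteq> \<Omega>" using open_\<Omega> z0 open_contains_ball by blast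
    have "z0 + of_real (e/2) \<in> \<Omega>" "z0 - of_real (e/2) \<in> \<Omega>"
         "z0 + \<i> * of_real (e/2) \<in> \<Omega>" "z0 - \<i> * of_real (e/2) \<in> \<Omega>"
      using e by (auto intro!: subsetD[OF e(2)] simp: dist_norm norm_mult)
    then have b1: "z0 + of_real (e/2) \<in> Box" "z0 - of_real (e/2) \<in> Box"
         "z0 + \<i> * of_real (e/2) \<in> Box" "z0 - \<i> * of_real (e/2) \<in> Box"
      using inbox by auto
    have xlt: "xmin < xmax" using b1(1,2) e(1) unfolding Box_def by simp
    have ylt: "ymin < ymax" using b1(3,4) e(1) unfolding Box_def by simp
    have "frontier \<Omega> \<noteq> {}"
      using False bounded_\<Omega> frontier_eq_empty not_bounded_UNIV by metis
    then have nc0: "0 < nc" using boundary by auto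
    define x where "x r = xmin + (xmax - xmin) * real r / real (k + 1)" for r
    define y where "y r = ymin + (ymax - ymin) * real r / real (k + 1)" for r
    have injx: "inj x"
    proof (rule injI)
      fix a b assume "x a = x b"
      then have "(xmax - xmin) * real a = (xmax - xmin) * real b"
        unfolding x_def by (simp add: divide_cancel_right del: of_nat_Suc)
      then show "a = b" using xlt by simp
    qed
    have injy: "inj y"
    proof (rule injI)
      fix a b assume "y a = y b"
      then have "(ymax - ymin) * real a = (ymax - ymin) * real b"
        unfolding y_def by (simp add: divide_cancel_right del: of_nat_Suc)
      then show "a = b" using ylt by simp
    qed
    have xin: "x r \<in> {xmin..xmax}" if "r \<le> k" for r
    proof -
      have "real r / real (k + 1) \<le> 1" using that by simp
      then have "(xmax - xmin) * (real r / real (k + 1)) \<le> (xmax - xmin) * 1"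
        using xlt by (intro mult_left_mono) auto
      moreover have "0 \<le> (xmax - xmin) * (real r / real (k + 1))" using xlt by simp
      moreover have "x r = xmin + (xmax - xmin) * (real r / real (k + 1))" by (simp add: x_def)
      ultimately show ?thesis by simp
    qed
    have yin: "y r \<in> {ymin..ymax}" if "r \<le> k" for r
    proof -
      have "real r / real (k + 1) \<le> 1" using that by simp
      then have "(ymax - ymin) * (real r / real (k + 1)) \<le> (ymax - ymin) * 1"
        using ylt by (intro mult_left_mono) auto
      moreover have "0 \<le> (ymax - ymin) * (real r / real (k + 1))" using ylt by simp
      moreover have "y r = ymin + (ymax - ymin) * (real r / real (k + 1))" by (simp add: y_def)
      ultimately show ?thesis by simp
    qed
    obtain \<Phi> where contP: "\<And>r s. continuous_on UNIV (\<lambda>z::complex. \<Phi> r s (Re z) (Im z))"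
      and rep: "\<And>f u v. f \<in> P2 k \<Longrightarrow> f u v = (\<Sum>r\<le>k. \<Sum>s\<le>k-r. f (x r) (y s) * \<Phi> r s u v)"
      using interp2[OF injx injy, of k] by blast
    define T where "T = Sigma {..k} (\<lambda>r. {..k - r})"
    have finT: "finite T" unfolding T_def by auto
    define om where "om r s = integral \<Omega> (\<lambda>z. \<Phi> r s (Re z) (Im z))" for r s
    have intP: "(\<lambda>z. \<Phi> r s (Re z) (Im z)) integrable_on \<Omega>" for r s
      by (rule integrable_cont_bounded_open[OF contP bounded_\<Omega> open_\<Omega>])
    have quad: "integral \<Omega> (\<lambda>z. poly2 k c (Re z) (Im z)) =
        (\<Sum>(r,s)\<in>T. om r s * poly2 k c (x r) (y s))" for c
    proof -
      have pc: "(\<lambda>u v. poly2 k c u v) \<in> P2 k" unfolding P2_def by blast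
      have "integral \<Omega> (\<lambda>z. poly2 k c (Re z) (Im z)) =
          integral \<Omega> (\<lambda>z. \<Sum>r\<le>k. \<Sum>s\<le>k-r. poly2 k c (x r) (y s) * \<Phi> r s (Re z) (Im z))"
        by (rule integral_cong) (rule rep[OF pc])
      also have "\<dots> = (\<Sum>r\<le>k. \<Sum>s\<le>k-r. poly2 k c (x r) (y s) * om r s)"
        unfolding om_def
        by (subst integral_sum, simp, rule integrable_sum, simp, rule integrable_on_mult_right, rule intP)
           (subst integral_sum, simp_all add: integrable_on_mult_right intP)
      also have "\<dots> = (\<Sum>(r,s)\<in>T. om r s * poly2 k c (x r) (y s))"
        unfolding T_def by (subst sum.Sigma) (auto simp: ac_simps)
      finally show ?thesis .
    qed
    have cardT: "2 * card T = (k + 1) * (k + 2)"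
      unfolding T_def by (subst card_SigmaI) (auto simp: tri_card)
    have "card T \<le> nq"
    proof -
      define C where "C = nat \<lceil>real (k + 1) / 2\<rceil>"
      have c0: "0 \<le> \<lceil>real (k + 1) / 2\<rceil>" by simp
      have "real C = real_of_int \<lceil>real (k + 1) / 2\<rceil>" unfolding C_def using c0 by simp
      moreover have "real (k + 1) / 2 \<le> real_of_int \<lceil>real (k + 1) / 2\<rceil>" by (rule le_of_int_ceiling)
      ultimately have "real (k + 1) / 2 \<le> real C" by simp
      then have "real (k + 1) \<le> 2 * real C" by (simp add: field_simps)
      then have C2: "k + 1 \<le> 2 * C" by linarith
      have "m 0 * (k + 3) + 1 \<le> (\<Sum>i<nc. m i * (k + 3) + 1)"
        using nc0 by (intro member_le_sum) auto
      moreover have "k + 4 \<le> m 0 * (k + 3) + 1" using deg[OF nc0] by (cases "m 0") auto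
      ultimately have S: "k + 4 \<le> (\<Sum>i<nc. m i * (k + 3) + 1)" by linarith
      have "(k + 1) * (k + 2) \<le> (2 * C) * (k + 4)" using C2 by (intro mult_mono) auto
      also have "\<dots> \<le> 2 * (C * (\<Sum>i<nc. m i * (k + 3) + 1))" using S by simp
      finally show ?thesis using cardT unfolding nq_def C_def by linarith
    qed
    obtain h where h: "bij_betw h {0..<card T} T" using ex_bij_betw_nat_finite[OF finT] by blast
    define pts where "pts l = (if l < card T then Complex (x (fst (h l))) (y (snd (h l))) else Complex xmin ymin)" for l
    define wts where "wts l = (if l < card T then om (fst (h l)) (snd (h l)) else 0)" for l
    have hT: "h l \<in> T" if "l < card T" for l using h that by (auto dest: bij_betwE)
    have "(\<forall>l<nq. Re (pts l) \<in> {xmin..xmax} \<and> Im (pts l) \<in> {ymin..ymax})"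
    proof (intro allI impI)
      fix l assume "l < nq"
      show "Re (pts l) \<in> {xmin..xmax} \<and> Im (pts l) \<in> {ymin..ymax}"
      proof (cases "l < card T")
        case True
        then have "fst (h l) \<le> k" "snd (h l) \<le> k" using hT[OF True] unfolding T_def by auto
        then show ?thesis using True xin yin unfolding pts_def by auto
      qed (use xlt ylt pts_def in auto)
    qed
    moreover have "integral \<Omega> (\<lambda>z. poly2 k c (Re z) (Im z)) =
            (\<Sum>l<nq. wts l * poly2 k c (Re (pts l)) (Im (pts l)))" for c
    proof -
      have "(\<Sum>l<nq. wts l * poly2 k c (Re (pts l)) (Im (pts l))) =
            (\<Sum>l\<in>{0..<card T}. wts l * poly2 k c (Re (pts l)) (Im (pts l)))"
        by (rule sum.mono_neutral_right) (use \<open>card T \<le> nq\<close> in \<open>auto simp: wts_def\<close>)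
      also have "\<dots> = (\<Sum>l\<in>{0..<card T}. (\<lambda>(r,s). om r s * poly2 k c (x r) (y s)) (h l))"
        by (rule sum.cong) (auto simp: wts_def pts_def split: prod.splits)
      also have "\<dots> = (\<Sum>(r,s)\<in>T. om r s * poly2 k c (x r) (y s))"
        by (rule sum.reindex_bij_betw[OF h])
      finally show ?thesis using quad[of c] by simp
    qed
    ultimately show ?thesis by blast
  qed
  show ?thesis
    using main unfolding Let_def nq_def xmin_def xmax_def ymin_def ymax_def XS_def YS_def .
qed

end
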